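(* Let $\Gamma$ be a group with a strictly decreasing sequence $\{\Gamma_n\}$ of finite-index normal subgroups with trivial intersection, $Z=\varprojlim\Gamma/\Gamma_n$ with the left translation action, $\pi_n:Z\to\Gamma/\Gamma_n$ the quotient maps, and for $n\ge2$ let $\gamma_n\in\Gamma_{n-1}\setminus\Gamma_n$ with $\gamma_n^2\notin\Gamma_n$, and $C_n=\pi_n^{-1}(\gamma_n\Gamma_n)$. Let $s_1,s_2\in\Gamma$ and $z,z'\in Z$ with $s_1z\in C_{n_1}$, $s_2z\in C_{n_2}$ where $n_1<n_2$, and $s_1z'\in C_{m_1}$, $s_2z'\in C_{m_2}$. Then $s_1s_2^{-1}\in\gamma_{n_1}\Gamma_{n_1}$, and either (1) $m_1=n_1<m_2$, or (2) $m_1=m_2<n_1$.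
   Context: $Z=\varprojlim\Gamma/\Gamma_n$ is the compact group of compatible sequences in $\prod_n\Gamma/\Gamma_n$, containing $\Gamma$ as a subgroup. All indices are $\ge2$. (In the paper $\Gamma$ is a finitely generated nonabelian free group.) *)

theory Defs
  imports "HOL-Algebra.Algebra"
begin

text \<open>A sequence z picks a coset z n of N n for every n, and is compatible with the
  reduction maps G/N n \<rightarrow> G/N m (m \<le> n), i.e. z n \<subseteq> z m.\<close>
definition invlim :: "('a, 'b) monoid_scheme \<Rightarrow> (nat \<Rightarrow> 'a set) \<Rightarrow> (nat \<Rightarrow> 'a set) set" where
  "invlim G N = {z. (\<forall>n. z n \<in> rcosets\<^bsub>G\<^esub> (N n)) \<and> (\<forall>m n. m \<le> n \<longrightarrow> z n \<subseteq> z m)}"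

definition transl :: "('a, 'b) monoid_scheme \<Rightarrow> 'a \<Rightarrow> (nat \<Rightarrow> 'a set) \<Rightarrow> (nat \<Rightarrow> 'a set)" where
  "transl G s z = (\<lambda>n. s <#\<^bsub>G\<^esub> z n)"

definition proj :: "(nat \<Rightarrow> 'a set) \<Rightarrow> nat \<Rightarrow> 'a set" where
  "proj z n = z n"

definition cyl :: "('a, 'b) monoid_scheme \<Rightarrow> (nat \<Rightarrow> 'a set) \<Rightarrow> (nat \<Rightarrow> 'a) \<Rightarrow> nat \<Rightarrow> (nat \<Rightarrow> 'a set) set" where
  "cyl G N \<gamma> n = {z \<in> invlim G N. proj z n = \<gamma> n <#\<^bsub>G\<^esub> N n}"

end

theory Submission
  imports Defs
begin

lemma cos_meet:
  fixes G (structure)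
  assumes "group G" "subgroup H G" "c \<in> rcosets\<^bsub>G\<^esub> H" "u \<in> c" "u \<in> H"
  shows "c = H"
proof -
  interpret group G by fact
  obtain y where y: "y \<in> carrier G" "c = H #> y" using assms(3) unfolding RCOSETS_def by blast
  have uc: "u \<in> carrier G" using subgroup.mem_carrier[OF assms(2,5)] .
  have "u \<in> H #> y" using assms(4) y(2) by (simp only:)
  then have "H #> y = H #> u" by (rule repr_independence[OF _ y(1) assms(2)])
  also have "\<dots> = H" using coset_join2[OF uc assms(2,5)] .
  finally show ?thesis using y(2) by (simp only:)
qed
lemma one_lcos:
  fixes G (structure)
  assumes "group G" "c \<subseteq> carrier G" "g \<in> carrier G"
  shows "(\<one>\<^bsub>G\<^esub> \<in> g <#\<^bsub>G\<^esub> c) = (inv\<^bsub>G\<^esub> g \<in> c)"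
proof -
  interpret group G by fact
  show ?thesis
  proof
    assume "\<one> \<in> g <# c"
    then obtain x where "x \<in> c" "\<one> = g \<otimes> x" unfolding l_coset_def by auto
    moreover have xc: "x \<in> carrier G" using \<open>x \<in> c\<close> assms(2) by blast
    ultimately have "x = inv g \<otimes> (g \<otimes> x)" using assms(3) by (simp add: m_assoc[symmetric])
    also have "\<dots> = inv g \<otimes> \<one>" using \<open>\<one> = g \<otimes> x\<close> by (simp only:)
    also have "\<dots> = inv g" using assms(3) by simp
    finally have "x = inv g" .
    then show "inv g \<in> c" using \<open>x \<in> c\<close> by simp
  next
    assume "inv g \<in> c"
    then show "\<one> \<in> g <# c" unfolding l_coset_def using assms by force
  qed
qed

lemma level:
  fixes G (structure)
  assumes "group G" "\<And>n. N n \<lhd> G" "\<And>n. N (Suc n) \<subset> N n"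
    and "\<And>n. n \<ge> 2 \<Longrightarrow> \<gamma> n \<in> N (n - 1) - N n"
    and "w \<in> cyl G N \<gamma> m" "m \<ge> 2"
  shows "(\<one>\<^bsub>G\<^esub> \<in> w k) = (k < m)"
proof -
  interpret group G by fact
  have sg: "\<And>n. subgroup (N n) G" using assms(2) normal_imp_subgroup by blast
  have anti: "\<And>i j. i \<le> j \<Longrightarrow> N j \<subseteq> N i"
  proof -
    fix i j :: nat assume "i \<le> j"
    have "\<And>n. N (Suc n) \<le> N n" using assms(3) by (simp add: psubset_imp_subset)
    then show "N j \<subseteq> N i" using lift_Suc_antimono_le[of N, OF _ \<open>i \<le> j\<close>] by simp
  qed
  have wi: "w \<in> invlim G N" and wm: "w m = \<gamma> m <# N m"
    using assms(5) unfolding cyl_def proj_def by auto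
  have cos: "\<And>n. w n \<in> rcosets (N n)" and comp: "\<And>i j. i \<le> j \<Longrightarrow> w j \<subseteq> w i"
    using wi unfolding invlim_def by auto
  have gN: "\<gamma> m \<in> N (m - 1)" "\<gamma> m \<notin> N m" using assms(4)[OF assms(6)] by auto
  have gc: "\<gamma> m \<in> carrier G" using subgroup.mem_carrier[OF sg gN(1)] .
  show ?thesis
  proof
    assume one: "\<one> \<in> w k"
    show "k < m"
    proof (rule ccontr)
      assume "\<not> k < m"
      then have "\<one> \<in> \<gamma> m <# N m" using comp[of m k] one wm by auto
      then obtain h where h: "h \<in> N m" "\<one> = \<gamma> m \<otimes> h" unfolding l_coset_def by auto
      have hc: "h \<in> carrier G" using subgroup.mem_carrier[OF sg h(1)] .
      have "\<gamma> m = inv h" using inv_equality[OF h(2)[symmetric] hc gc] by simp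
      then have "\<gamma> m \<in> N m" using subgroup.m_inv_closed[OF sg h(1)] by simp
      then show False using gN by simp
    qed
  next
    assume "k < m"
    have "\<gamma> m \<otimes> \<one> \<in> w m" unfolding wm l_coset_def using subgroup.one_closed[OF sg[of m]] by blast
    then have "\<gamma> m \<in> w m" using r_one[OF gc] by (simp only:)
    then have "\<gamma> m \<in> w k" using comp[of k m] \<open>k < m\<close> by auto
    moreover have "\<gamma> m \<in> N k" 
    proof -
      have "k \<le> m - 1" using \<open>k < m\<close> by simp
      then have "N (m - 1) \<subseteq> N k" by (rule anti)
      then show ?thesis using gN(1) by blast
    qed
    ultimately have "w k = N k" by (rule cos_meet[OF assms(1) sg cos])
    then show "\<one> \<in> w k" using subgroup.one_closed[OF sg[of k]] by (simp only:)
  qed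
qed

theorem lemma5p9:
  fixes G (structure) and N :: "nat \<Rightarrow> 'a set" and \<gamma> :: "nat \<Rightarrow> 'a"
    and s1 s2 :: 'a and z z' :: "nat \<Rightarrow> 'a set" and n1 n2 m1 m2 :: nat
  assumes "group G"
    and "\<And>n. N n \<lhd> G"
    and "\<And>n. N (Suc n) \<subset> N n"
    and "\<And>n. finite (rcosets (N n))"
    and "(\<Inter>n. N n) = {\<one>}"
    and "\<And>n. n \<ge> 2 \<Longrightarrow> \<gamma> n \<in> N (n - 1) - N n"
    and "\<And>n. n \<ge> 2 \<Longrightarrow> \<gamma> n \<otimes> \<gamma> n \<notin> N n"
    and "s1 \<in> carrier G" "s2 \<in> carrier G"
    and "z \<in> invlim G N" "z' \<in> invlim G N"
    and "n1 \<ge> 2" "n2 \<ge> 2" "m1 \<ge> 2" "m2 \<ge> 2"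
    and "n1 < n2"
    and "transl G s1 z \<in> cyl G N \<gamma> n1" "transl G s2 z \<in> cyl G N \<gamma> n2"
    and "transl G s1 z' \<in> cyl G N \<gamma> m1" "transl G s2 z' \<in> cyl G N \<gamma> m2"
  shows "s1 \<otimes> inv s2 \<in> \<gamma> n1 <# N n1
         \<and> ((m1 = n1 \<and> n1 < m2) \<or> (m1 = m2 \<and> m2 < n1))"
proof -
  interpret group G by fact
  have sg: "\<And>n. subgroup (N n) G" using assms(2) normal_imp_subgroup by blast
  have anti: "\<And>i j. i \<le> j \<Longrightarrow> N j \<subseteq> N i"
  proof -
    fix i j :: nat assume "i \<le> j"
    have "\<And>n. N (Suc n) \<le> N n" using assms(3) by (simp add: psubset_imp_subset)
    then show "N j \<subseteq> N i" using lift_Suc_antimono_le[of N, OF _ \<open>i \<le> j\<close>] by simp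
  qed
  note lev = level[OF assms(1) assms(2) assms(3) assms(6)]
  have L1: "\<And>k. (\<one> \<in> transl G s1 z k) = (k < n1)" using lev assms(17,12) by blast
  have L2: "\<And>k. (\<one> \<in> transl G s2 z k) = (k < n2)" using lev assms(18,13) by blast
  have K1: "\<And>k. (\<one> \<in> transl G s1 z' k) = (k < m1)" using lev assms(19,14) by blast
  have K2: "\<And>k. (\<one> \<in> transl G s2 z' k) = (k < m2)" using lev assms(20,15) by blast
  have s1c: "s1 \<in> carrier G" and s2c: "s2 \<in> carrier G" using assms(8,9) .
  define g where "g = s1 \<otimes> inv s2"
  have gc: "g \<in> carrier G" unfolding g_def using s1c s2c by simp
  have gs2: "g \<otimes> s2 = s1" unfolding g_def using s1c s2c by (simp add: m_assoc)
  have rel: "\<And>y k. y \<in> invlim G N \<Longrightarrow> transl G s1 y k = g <# transl G s2 y k"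
  proof -
    fix y k assume "y \<in> invlim G N"
    then have "y k \<in> rcosets (N k)" unfolding invlim_def by blast
    then have "y k \<subseteq> carrier G" using subgroup.rcosets_carrier[OF sg assms(1)] by blast
    then show "transl G s1 y k = g <# transl G s2 y k"
      unfolding transl_def using lcos_m_assoc[OF _ gc s2c] gs2 by simp
  qed
  have cosW: "\<And>k. transl G s2 z' k \<in> rcosets (N k)"
    using assms(20) unfolding cyl_def invlim_def by blast
  have cosV: "\<And>k. transl G s2 z k \<in> rcosets (N k)"
    using assms(18) unfolding cyl_def invlim_def by blast
  have carW: "\<And>k. transl G s2 z' k \<subseteq> carrier G"
    using subgroup.rcosets_carrier[OF sg assms(1) cosW] .
  have V1: "transl G s1 z n1 = \<gamma> n1 <# N n1" using assms(17) unfolding cyl_def proj_def by blast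
  have W1: "transl G s1 z' m1 = \<gamma> m1 <# N m1" using assms(19) unfolding cyl_def proj_def by blast
  have W2: "transl G s2 z' m2 = \<gamma> m2 <# N m2" using assms(20) unfolding cyl_def proj_def by blast
  have "\<one> \<in> transl G s2 z n1" using L2 assms(16) by blast
  then have "g \<otimes> \<one> \<in> g <# transl G s2 z n1" unfolding l_coset_def by blast
  then have "g \<in> transl G s1 z n1" using rel[OF assms(10)] gc by simp
  then have part1: "g \<in> \<gamma> n1 <# N n1" using V1 by simp
  define c where "c = \<gamma> n1"
  have cN: "c \<in> N (n1 - 1)" "c \<notin> N n1" "c \<otimes> c \<notin> N n1"
    using assms(6,7)[OF assms(12)] unfolding c_def by auto
  have cc: "c \<in> carrier G" using subgroup.mem_carrier[OF sg cN(1)] .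
  obtain h where h: "h \<in> N n1" "g = c \<otimes> h" using part1 unfolding l_coset_def c_def by blast
  have hc: "h \<in> carrier G" using subgroup.mem_carrier[OF sg h(1)] .
  have F1: "g \<notin> N n1"
  proof
    assume "g \<in> N n1"
    then have "g \<otimes> inv h \<in> N n1" using subgroup.m_closed[OF sg] subgroup.m_inv_closed[OF sg h(1)] by blast
    moreover have "g \<otimes> inv h = c" using h(2) cc hc by (simp add: m_assoc)
    ultimately show False using cN(2) by simp
  qed
  have F2: "\<And>k. k < n1 \<Longrightarrow> inv g \<in> N k"
  proof -
    fix k assume "k < n1"
    have "h \<in> N (n1 - 1)" using anti[of "n1 - 1" n1] h(1) by auto
    then have "g \<in> N (n1 - 1)" using h(2) cN(1) subgroup.m_closed[OF sg] by blast
    moreover have "k \<le> n1 - 1" using \<open>k < n1\<close> by simp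
    ultimately have "g \<in> N k" using anti by blast
    then show "inv g \<in> N k" using subgroup.m_inv_closed[OF sg] by blast
  qed
  have F3: "inv g \<otimes> inv c \<notin> N n1"
  proof
    assume a: "inv g \<otimes> inv c \<in> N n1"
    have "inv g \<otimes> inv c = inv (c \<otimes> g)" using gc cc by (simp add: inv_mult_group)
    then have "inv (inv (c \<otimes> g)) \<in> N n1" using a subgroup.m_inv_closed[OF sg] by metis
    then have "c \<otimes> g \<in> N n1" using gc cc by simp
    then have "(c \<otimes> g) \<otimes> inv h \<in> N n1" using subgroup.m_closed[OF sg] subgroup.m_inv_closed[OF sg h(1)] by blast
    moreover have "(c \<otimes> g) \<otimes> inv h = c \<otimes> c" using h(2) cc hc by (simp add: m_assoc)
    ultimately show False using cN(3) by simp
  qed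
  have E: "\<And>k. k < n1 \<Longrightarrow> (k < m1) = (k < m2)"
  proof -
    fix k assume k: "k < n1"
    have "(\<one> \<in> transl G s1 z' k) = (inv g \<in> transl G s2 z' k)"
      using rel[OF assms(11)] one_lcos[OF assms(1) carW gc] by simp
    also have "\<dots> = (\<one> \<in> transl G s2 z' k)"
    proof
      assume "inv g \<in> transl G s2 z' k"
      then have "transl G s2 z' k = N k" using cos_meet[OF assms(1) sg cosW _ F2[OF k]] by blast
      then show "\<one> \<in> transl G s2 z' k" using subgroup.one_closed[OF sg[of k]] by (simp only:)
    next
      assume "\<one> \<in> transl G s2 z' k"
      then have "transl G s2 z' k = N k" using cos_meet[OF assms(1) sg cosW _ subgroup.one_closed[OF sg]] by blast
      then show "inv g \<in> transl G s2 z' k" using F2[OF k] by (simp only:)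
    qed
    finally show "(k < m1) = (k < m2)" using K1 K2 by simp
  qed
  have n1W1: "(\<one> \<in> transl G s1 z' n1) = (inv g \<in> transl G s2 z' n1)"
    using rel[OF assms(11)] one_lcos[OF assms(1) carW gc] by simp
  have A: "n1 < m2 \<Longrightarrow> \<not> n1 < m1"
  proof
    assume "n1 < m2" "n1 < m1"
    then have "inv g \<in> transl G s2 z' n1" using n1W1 K1 by simp
    moreover have "\<one> \<in> transl G s2 z' n1" using K2 \<open>n1 < m2\<close> by simp
    ultimately have "inv g \<in> N n1" using cos_meet[OF assms(1) sg cosW _ subgroup.one_closed[OF sg]] by blast
    then have "inv (inv g) \<in> N n1" using subgroup.m_inv_closed[OF sg] by blast
    then show False using F1 gc by simp
  qed
  have ge: "m2 \<ge> n1 \<Longrightarrow> m1 \<ge> n1"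
  proof -
    assume "m2 \<ge> n1"
    have "n1 - 1 < n1" using assms(12) by simp
    then have "n1 - 1 < m1" using E[of "n1 - 1"] \<open>m2 \<ge> n1\<close> by simp
    then show "m1 \<ge> n1" by simp
  qed
  have notB: "m2 \<noteq> n1"
  proof
    assume eq: "m2 = n1"
    have W2n: "transl G s2 z' n1 = N n1 #> c" using W2 eq normal.coset_eq[OF assms(2)] cc unfolding c_def by simp
    have "\<not> n1 < m1"
    proof
      assume "n1 < m1"
      then have "inv g \<in> N n1 #> c" using n1W1 K1 W2n by simp
      then have "inv g \<otimes> inv c \<in> N n1" using subgroup.rcos_module_imp[OF sg assms(1) cc] by blast
      then show False using F3 by simp
    qed
    then have m1eq: "m1 = n1" using ge eq by simp
    have "c \<otimes> \<one> \<in> c <# N n1" unfolding l_coset_def using subgroup.one_closed[OF sg] by blast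
    then have "c \<in> transl G s2 z' n1" using W2 eq cc unfolding c_def by simp
    then have "g \<otimes> c \<in> g <# transl G s2 z' n1" unfolding l_coset_def by blast
    then have "g \<otimes> c \<in> transl G s1 z' n1" using rel[OF assms(11)] by simp
    also have "transl G s1 z' n1 = transl G s2 z' n1" using W1 W2 m1eq eq by simp
    finally have "g \<otimes> c \<in> N n1 #> c" using W2n by simp
    then have "(g \<otimes> c) \<otimes> inv c \<in> N n1" using subgroup.rcos_module_imp[OF sg assms(1) cc] by blast
    moreover have "(g \<otimes> c) \<otimes> inv c = g" using gc cc by (simp add: m_assoc)
    ultimately show False using F1 by simp
  qed
  have part2: "(m1 = n1 \<and> n1 < m2) \<or> (m1 = m2 \<and> m2 < n1)"
  proof (cases "n1 < m2")
    case True
    then show ?thesis using A ge by fastforce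
  next
    case False
    then have lt: "m2 < n1" using notB by simp
    have "\<not> m2 < m1" using E[OF lt] by simp
    moreover have "\<not> m1 < m2" using E[of m1] lt by fastforce
    ultimately show ?thesis using lt by simp
  qed
  show ?thesis using part1 part2 unfolding g_def by blast
qed

end
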